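(* Let $(A,\mathcal H)$ be a commutative Hopf algebroid and $I$ a normal Hopf ideal of $\mathcal H$. Then $\{h\in\mathcal H:\sum h_1\otimes_A q(h_2)=h\otimes_Aq(1)\}=\{h\in\mathcal H:\sum q(h_1)\otimes_Ah_2=q(1)\otimes_Ah\}$ as subalgebras of $\mathcal H$, where $q:\mathcal H\to\overline{\mathcal H}/\bar I$ is the canonical projection.
   Context: A commutative Hopf algebroid $(A,\mathcal H)$ over a field $\Bbbk$: commutative $\Bbbk$-algebras $A,\mathcal H$ with algebra maps $s,t:A\to\mathcal H$, $\varepsilon:\mathcal H\to A$, $\Delta:\mathcal H\to\mathcal H\otimes_A\mathcal H$ (left factor an $A$-module via $t$, right via $s$), $\mathcal S:\mathcal H\to\mathcal H$ such that $(\mathcal H,\Delta,\varepsilon)$ is a coassociative counital $A$-coring, $\mathcal Ss=t$, $\mathcal St=s$, $\mathcal S^2=\mathrm{id}$, $\sum\mathcal S(u_1)u_2=t\varepsilon(u)$, $\sum u_1\mathcal S(u_2)=s\varepsilon(u)$ ($\Delta(u)=\sum u_1\otimes_Au_2$). A Hopf ideal: ideal $I$ with $\varepsilon(I)=0$, $\Delta(I)\subseteq$ image of $\mathcal H\otimes_AI+I\otimes_A\mathcal H$, $\mathcal S(I)\subseteq I$. Let $\langle s-t\rangle$ be the ideal generated by all $s(a)-t(a)$, $\overline{\mathcal H}=\mathcal H/\langle s-t\rangle$ with classes $\bar x$ and $A$-algebra structure $\eta(a)=\overline{s(a)}=\overline{t(a)}$, and $\bar I=I/\langle s-t\rangle$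 when $\langle s-t\rangle\subseteq I$. $I$ is normal if $\langle s-t\rangle\subseteq I$ and for every $x\in I$, $\sum\overline{x_2}\otimes_A\mathcal S(x_1)x_3\in\overline{\mathcal H}\otimes_A\mathcal H$ lies in the image of $\bar I\otimes_A\mathcal H$. In the tensor products of the claim, $\mathcal H$ is a right $A$-module via $t$ on the left factor and a left $A$-module via $s$ on the right factor, and $\overline{\mathcal H}/\bar I$ is an $A$-module via $\eta$. *)

theory Defs
  imports Main
begin

definition is_ring_hom :: "('a::comm_ring_1 \<Rightarrow> 'b::comm_ring_1) \<Rightarrow> bool" where
  "is_ring_hom f \<longleftrightarrow> f 1 = 1 \<and> (\<forall>x y. f (x + y) = f x + f y) \<and> (\<forall>x y. f (x * y) = f x * f y)"

definition is_ideal :: "'h::comm_ring_1 set \<Rightarrow> bool" where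
  "is_ideal I \<longleftrightarrow> 0 \<in> I \<and> (\<forall>x\<in>I. \<forall>y\<in>I. x + y \<in> I) \<and> (\<forall>x\<in>I. \<forall>h. h * x \<in> I)"

definition st_ideal :: "('a \<Rightarrow> 'h::comm_ring_1) \<Rightarrow> ('a \<Rightarrow> 'h) \<Rightarrow> 'h set" where
  "st_ideal s t = {sum_list (map (\<lambda>(h, a). h * (s a - t a)) l) | l. True}"

text \<open>An element of (H/J_1) \<otimes>_A ... \<otimes>_A (H/J_n) is represented by a formal
  Z-linear combination of n-tuples (lists of length n) of representatives in H.
  Slot i is a right A-module via t and slot i+1 a left A-module via s
  (multiplication in H).\<close>

definition delta :: "'x \<Rightarrow> ('x \<Rightarrow> int)" where
  "delta v = (\<lambda>w. if w = v then 1 else 0)"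

definition fsum :: "'x list \<Rightarrow> ('x \<Rightarrow> int)" where
  "fsum xs = (\<lambda>w. int (count_list xs w))"

inductive_set tensor_rel :: "nat \<Rightarrow> 'h::comm_ring_1 set list \<Rightarrow> ('a \<Rightarrow> 'h) \<Rightarrow> ('a \<Rightarrow> 'h)
    \<Rightarrow> ('h list \<Rightarrow> int) set"
  for n :: nat and Js :: "'h set list" and s :: "'a \<Rightarrow> 'h" and t :: "'a \<Rightarrow> 'h" where
  zero: "(\<lambda>_. 0) \<in> tensor_rel n Js s t"
| diff: "f \<in> tensor_rel n Js s t \<Longrightarrow> g \<in> tensor_rel n Js s t \<Longrightarrow> (\<lambda>w. f w - g w) \<in> tensor_rel n Js s t"
| additive: "length xs = n \<Longrightarrow> i < n \<Longrightarrow>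
     (\<lambda>w. delta (xs[i := x + y]) w - delta (xs[i := x]) w - delta (xs[i := y]) w) \<in> tensor_rel n Js s t"
| balanced: "length xs = n \<Longrightarrow> Suc i < n \<Longrightarrow>
     (\<lambda>w. delta (xs[i := xs ! i * t a]) w - delta (xs[Suc i := xs ! Suc i * s a]) w) \<in> tensor_rel n Js s t"
| kill: "length xs = n \<Longrightarrow> i < n \<Longrightarrow> xs ! i \<in> Js ! i \<Longrightarrow> delta xs \<in> tensor_rel n Js s t"

definition tensor_eq :: "nat \<Rightarrow> 'h::comm_ring_1 set list \<Rightarrow> ('a \<Rightarrow> 'h) \<Rightarrow> ('a \<Rightarrow> 'h)
    \<Rightarrow> 'h list list \<Rightarrow> 'h list list \<Rightarrow> bool" where
  "tensor_eq n Js s t xs ys \<longleftrightarrow> (\<lambda>w. fsum xs w - fsum ys w) \<in> tensor_rel n Js s t"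

definition tup2 :: "('h \<times> 'h) list \<Rightarrow> 'h list list" where
  "tup2 l = map (\<lambda>(a, b). [a, b]) l"

definition eqHH :: "('a \<Rightarrow> 'h::comm_ring_1) \<Rightarrow> ('a \<Rightarrow> 'h) \<Rightarrow> ('h \<times> 'h) list \<Rightarrow> ('h \<times> 'h) list \<Rightarrow> bool" where
  "eqHH s t xs ys \<longleftrightarrow> tensor_eq 2 [{0}, {0}] s t (tup2 xs) (tup2 ys)"

definition DeltaL :: "('h \<Rightarrow> ('h \<times> 'h) list) \<Rightarrow> 'h \<Rightarrow> ('h \<times> 'h \<times> 'h) list" where
  "DeltaL Delta u = concat (map (\<lambda>(x, y). map (\<lambda>(a, b). (a, b, y)) (Delta x)) (Delta u))"

definition DeltaR :: "('h \<Rightarrow> ('h \<times> 'h) list) \<Rightarrow> 'h \<Rightarrow> ('h \<times> 'h \<times> 'h) list" where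
  "DeltaR Delta u = concat (map (\<lambda>(x, y). map (\<lambda>(a, b). (x, a, b)) (Delta y)) (Delta u))"

definition tup3 :: "('h \<times> 'h \<times> 'h) list \<Rightarrow> 'h list list" where
  "tup3 l = map (\<lambda>(a, b, c). [a, b, c]) l"

text \<open>kA, kH are the k-algebra structure maps of A and H.  Delta u is a
  (chosen) representative  sum u_1 \<otimes>_A u_2  of the comultiplication.\<close>
definition comm_hopf_algebroid ::
  "('k::field \<Rightarrow> 'a::comm_ring_1) \<Rightarrow> ('k \<Rightarrow> 'h::comm_ring_1) \<Rightarrow> ('a \<Rightarrow> 'h) \<Rightarrow> ('a \<Rightarrow> 'h)
   \<Rightarrow> ('h \<Rightarrow> 'a) \<Rightarrow> ('h \<Rightarrow> ('h \<times> 'h) list) \<Rightarrow> ('h \<Rightarrow> 'h) \<Rightarrow> bool" where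
  "comm_hopf_algebroid kA kH s t eps Delta S \<longleftrightarrow>
     is_ring_hom kA \<and> is_ring_hom kH \<and>
     is_ring_hom s \<and> is_ring_hom t \<and> is_ring_hom eps \<and> is_ring_hom S \<and>
     s \<circ> kA = kH \<and> t \<circ> kA = kH \<and> eps \<circ> kH = kA \<and> S \<circ> kH = kH \<and>
     \<comment> \<open>Delta is a k-algebra map H \<rightarrow> H \<otimes>_A H\<close>
     eqHH s t (Delta 1) [(1, 1)] \<and>
     (\<forall>u v. eqHH s t (Delta (u + v)) (Delta u @ Delta v)) \<and>
     (\<forall>u v. eqHH s t (Delta (u * v)) [(a * c, b * d). (a, b) \<leftarrow> Delta u, (c, d) \<leftarrow> Delta v]) \<and>
     (\<forall>c u. eqHH s t (Delta (kH c * u)) (map (\<lambda>(a, b). (kH c * a, b)) (Delta u))) \<and>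
     \<comment> \<open>A-coring structure: Delta and eps are A-bimodule maps\<close>
     (\<forall>a u. eqHH s t (Delta (s a * u)) (map (\<lambda>(x, y). (s a * x, y)) (Delta u))) \<and>
     (\<forall>a u. eqHH s t (Delta (t a * u)) (map (\<lambda>(x, y). (x, t a * y)) (Delta u))) \<and>
     (\<forall>a u. eps (s a * u) = a * eps u) \<and>
     (\<forall>a u. eps (t a * u) = eps u * a) \<and>
     \<comment> \<open>coassociativity\<close>
     (\<forall>u. tensor_eq 3 [{0}, {0}, {0}] s t (tup3 (DeltaL Delta u)) (tup3 (DeltaR Delta u))) \<and>
     \<comment> \<open>counitality\<close>
     (\<forall>u. sum_list (map (\<lambda>(x, y). s (eps x) * y) (Delta u)) = u) \<and>
     (\<forall>u. sum_list (map (\<lambda>(x, y). x * t (eps y)) (Delta u)) = u) \<and>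
     \<comment> \<open>antipode\<close>
     S \<circ> s = t \<and> S \<circ> t = s \<and> (\<forall>u. S (S u) = u) \<and>
     (\<forall>u. sum_list (map (\<lambda>(x, y). S x * y) (Delta u)) = t (eps u)) \<and>
     (\<forall>u. sum_list (map (\<lambda>(x, y). x * S y) (Delta u)) = s (eps u))"

definition hopf_ideal ::
  "('a \<Rightarrow> 'h::comm_ring_1) \<Rightarrow> ('a \<Rightarrow> 'h) \<Rightarrow> ('h \<Rightarrow> 'a::comm_ring_1) \<Rightarrow> ('h \<Rightarrow> ('h \<times> 'h) list)
   \<Rightarrow> ('h \<Rightarrow> 'h) \<Rightarrow> 'h set \<Rightarrow> bool" where
  "hopf_ideal s t eps Delta S I \<longleftrightarrow>
     is_ideal I \<and> (\<forall>x\<in>I. eps x = 0) \<and>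
     (\<forall>x\<in>I. \<exists>ys. (\<forall>(a, b)\<in>set ys. a \<in> I \<or> b \<in> I) \<and> eqHH s t (Delta x) ys) \<and>
     (\<forall>x\<in>I. S x \<in> I)"

text \<open>Normality: <s-t> \<subseteq> I and  sum xbar_2 \<otimes> S(x_1) x_3  lies in the image of
  Ibar \<otimes>_A H inside Hbar \<otimes>_A H, where Hbar = H/<s-t>.\<close>
definition normal_hopf_ideal ::
  "('a \<Rightarrow> 'h::comm_ring_1) \<Rightarrow> ('a \<Rightarrow> 'h) \<Rightarrow> ('h \<Rightarrow> 'a::comm_ring_1) \<Rightarrow> ('h \<Rightarrow> ('h \<times> 'h) list)
   \<Rightarrow> ('h \<Rightarrow> 'h) \<Rightarrow> 'h set \<Rightarrow> bool" where
  "normal_hopf_ideal s t eps Delta S I \<longleftrightarrow>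
     hopf_ideal s t eps Delta S I \<and> st_ideal s t \<subseteq> I \<and>
     (\<forall>x\<in>I. \<exists>ys. (\<forall>(a, b)\<in>set ys. a \<in> I) \<and>
        tensor_eq 2 [st_ideal s t, {0}] s t
          (map (\<lambda>(x1, x2, x3). [x2, S x1 * x3]) (DeltaL Delta x)) (tup2 ys))"

end

theory Submission
  imports Defs "HOL-Library.Multiset"
begin


lemma rel_neg: "f \<in> tensor_rel n Js s t \<Longrightarrow> (\<lambda>w. - f w) \<in> tensor_rel n Js s t"
  using tensor_rel.diff[OF tensor_rel.zero, of f] by simp

lemma rel_add: "f \<in> tensor_rel n Js s t \<Longrightarrow> g \<in> tensor_rel n Js s t \<Longrightarrow> (\<lambda>w. f w + g w) \<in> tensor_rel n Js s t"
  using tensor_rel.diff[OF _ rel_neg, of f n Js s t g] by simp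

lemma fsum_Nil[simp]: "fsum [] = (\<lambda>_. 0)" by (simp add: fsum_def)
lemma fsum_Cons: "fsum (x # X) = (\<lambda>w. delta x w + fsum X w)"
  by (auto simp: fsum_def delta_def fun_eq_iff)
lemma fsum_append: "fsum (X @ Y) = (\<lambda>w. fsum X w + fsum Y w)"
  by (auto simp: fsum_def fun_eq_iff)

lemma te_refl[simp]: "tensor_eq n Js s t X X"
  by (simp add: tensor_eq_def tensor_rel.zero)

lemma te_sym: "tensor_eq n Js s t X Y \<Longrightarrow> tensor_eq n Js s t Y X"
  unfolding tensor_eq_def by (drule rel_neg) simp

lemma te_trans: "tensor_eq n Js s t X Y \<Longrightarrow> tensor_eq n Js s t Y Z \<Longrightarrow> tensor_eq n Js s t X Z"
  unfolding tensor_eq_def by (drule (1) rel_add) simp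

lemma te_app: "tensor_eq n Js s t X Y \<Longrightarrow> tensor_eq n Js s t X' Y' \<Longrightarrow> tensor_eq n Js s t (X @ X') (Y @ Y')"
  unfolding tensor_eq_def by (drule (1) rel_add) (simp add: fsum_append algebra_simps)

lemma te_mset: "mset X = mset Y \<Longrightarrow> tensor_eq n Js s t X Y"
proof -
  assume "mset X = mset Y"
  then have "fsum X = fsum Y" by (simp add: fsum_def fun_eq_iff flip: count_mset)
  then show ?thesis by (simp add: tensor_eq_def tensor_rel.zero)
qed

lemma te_concat: "(\<And>l. l \<in> set L \<Longrightarrow> tensor_eq n Js s t (f l) (g l)) \<Longrightarrow>
   tensor_eq n Js s t (concat (map f L)) (concat (map g L))"
  by (induction L) (auto intro: te_app)

lemma te_Nil_cancel:
  assumes "tensor_eq n Js s t (X @ X) X" shows "tensor_eq n Js s t X []"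
proof -
  have "(\<lambda>w. fsum (X @ X) w - fsum X w) = (\<lambda>w. fsum X w - fsum [] w)"
    by (simp add: fsum_append)
  then show ?thesis using assms by (simp add: tensor_eq_def)
qed

lemma gen_add: "length xs = n \<Longrightarrow> i < n \<Longrightarrow>
   tensor_eq n Js s t [xs[i := x + y]] [xs[i := x], xs[i := y]]"
  using tensor_rel.additive[where xs=xs and n=n and i=i and Js=Js and s=s and t=t and x=x and y=y]
  by (simp add: tensor_eq_def fsum_Cons algebra_simps)

lemma gen_bal: "length xs = n \<Longrightarrow> Suc i < n \<Longrightarrow>
   tensor_eq n Js s t [xs[i := xs ! i * t a]] [xs[Suc i := xs ! Suc i * s a]]"
  using tensor_rel.balanced[where xs=xs and n=n and i=i and Js=Js and s=s and t=t and a=a]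
  by (simp add: tensor_eq_def fsum_Cons algebra_simps)

lemma gen_kill: "length xs = n \<Longrightarrow> i < n \<Longrightarrow> xs ! i \<in> Js ! i \<Longrightarrow>
   tensor_eq n Js s t [xs] []"
  using tensor_rel.kill[where xs=xs and n=n and i=i and Js=Js and s=s and t=t]
  by (simp add: tensor_eq_def fsum_Cons algebra_simps)

lemma gen_zero: "length xs = n \<Longrightarrow> i < n \<Longrightarrow> tensor_eq n Js s t [xs[i := 0]] []"
proof -
  assume "length xs = n" "i < n"
  then have "tensor_eq n Js s t ([xs[i := 0]] @ [xs[i := 0]]) [xs[i := 0]]"
    using gen_add[of xs n i Js s t 0 0] by (simp add: te_sym)
  then show ?thesis by (rule te_Nil_cancel)
qed

section \<open>Linear extension\<close>

definition supp :: "('x \<Rightarrow> int) \<Rightarrow> 'x set" where "supp f = {v. f v \<noteq> 0}"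

definition Phi :: "('x \<Rightarrow> 'y list) \<Rightarrow> ('x \<Rightarrow> int) \<Rightarrow> ('y \<Rightarrow> int)" where
  "Phi \<phi> f = (\<lambda>w. \<Sum>v\<in>supp f. f v * fsum (\<phi> v) w)"

lemma Phi_super: "finite V \<Longrightarrow> supp f \<subseteq> V \<Longrightarrow> Phi \<phi> f w = (\<Sum>v\<in>V. f v * fsum (\<phi> v) w)"
  unfolding Phi_def by (rule sum.mono_neutral_left) (auto simp: supp_def)

lemma Phi_diff: "finite (supp f) \<Longrightarrow> finite (supp g) \<Longrightarrow>
   Phi \<phi> (\<lambda>w. f w - g w) = (\<lambda>w. Phi \<phi> f w - Phi \<phi> g w)"
proof
  fix w assume a: "finite (supp f)" "finite (supp g)"
  let ?V = "supp f \<union> supp g"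
  have "supp (\<lambda>w. f w - g w) \<subseteq> ?V" by (auto simp: supp_def)
  then have "Phi \<phi> (\<lambda>w. f w - g w) w = (\<Sum>v\<in>?V. (f v - g v) * fsum (\<phi> v) w)"
    using a by (intro Phi_super) auto
  also have "\<dots> = (\<Sum>v\<in>?V. f v * fsum (\<phi> v) w) - (\<Sum>v\<in>?V. g v * fsum (\<phi> v) w)"
    by (simp add: left_diff_distrib sum_subtractf)
  also have "\<dots> = Phi \<phi> f w - Phi \<phi> g w"
    using a by (subst (1 2) Phi_super[of ?V]) auto
  finally show "Phi \<phi> (\<lambda>w. f w - g w) w = Phi \<phi> f w - Phi \<phi> g w" .
qed

lemma Phi_add: "finite (supp f) \<Longrightarrow> finite (supp g) \<Longrightarrow>
   Phi \<phi> (\<lambda>w. f w + g w) = (\<lambda>w. Phi \<phi> f w + Phi \<phi> g w)"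
proof
  fix w assume a: "finite (supp f)" "finite (supp g)"
  let ?V = "supp f \<union> supp g"
  have "supp (\<lambda>w. f w + g w) \<subseteq> ?V" by (auto simp: supp_def)
  then have "Phi \<phi> (\<lambda>w. f w + g w) w = (\<Sum>v\<in>?V. (f v + g v) * fsum (\<phi> v) w)"
    using a by (intro Phi_super) auto
  also have "\<dots> = (\<Sum>v\<in>?V. f v * fsum (\<phi> v) w) + (\<Sum>v\<in>?V. g v * fsum (\<phi> v) w)"
    by (simp add: distrib_right sum.distrib)
  also have "\<dots> = Phi \<phi> f w + Phi \<phi> g w"
    using a by (subst (1 2) Phi_super[of ?V]) auto
  finally show "Phi \<phi> (\<lambda>w. f w + g w) w = Phi \<phi> f w + Phi \<phi> g w" .
qed

lemma supp_delta: "supp (delta v) = {v}" by (auto simp: supp_def delta_def)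

lemma Phi_delta: "Phi \<phi> (delta v) = fsum (\<phi> v)"
  unfolding Phi_def supp_delta by (simp add: delta_def)

lemma Phi_zero: "Phi \<phi> (\<lambda>_. 0) = (\<lambda>_. 0)"
  by (simp add: Phi_def supp_def)

lemma finite_supp_fsum: "finite (supp (fsum X))"
proof -
  have "supp (fsum X) \<subseteq> set X" by (auto simp: supp_def fsum_def count_list_0_iff)
  then show ?thesis by (rule finite_subset) simp
qed

lemma finite_supp_diff: "finite (supp f) \<Longrightarrow> finite (supp g) \<Longrightarrow> finite (supp (\<lambda>w. f w - g w))"
  by (rule finite_subset[of _ "supp f \<union> supp g"]) (auto simp: supp_def)

lemma finite_supp_add: "finite (supp f) \<Longrightarrow> finite (supp g) \<Longrightarrow> finite (supp (\<lambda>w. f w + g w))"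
  by (rule finite_subset[of _ "supp f \<union> supp g"]) (auto simp: supp_def)

lemma finite_supp_delta: "finite (supp (delta v))" by (simp add: supp_delta)

lemma Phi_fsum: "Phi \<phi> (fsum X) = fsum (concat (map \<phi> X))"
proof (induction X)
  case Nil then show ?case by (simp add: Phi_zero)
next
  case (Cons x X)
  show ?case
    by (simp add: fsum_Cons Phi_add[OF finite_supp_delta finite_supp_fsum] Phi_delta Cons
        fsum_append)
qed

lemma respects_intro:
  assumes A: "\<And>xs i x y. length xs = n \<Longrightarrow> i < n \<Longrightarrow>
      tensor_eq n' Js' s' t' (\<phi> (xs[i := x + y])) (\<phi> (xs[i := x]) @ \<phi> (xs[i := y]))"
  and B: "\<And>xs i a. length xs = n \<Longrightarrow> Suc i < n \<Longrightarrow>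
      tensor_eq n' Js' s' t' (\<phi> (xs[i := xs ! i * t a])) (\<phi> (xs[Suc i := xs ! Suc i * s a]))"
  and K: "\<And>xs i. length xs = n \<Longrightarrow> i < n \<Longrightarrow> xs ! i \<in> Js ! i \<Longrightarrow>
      tensor_eq n' Js' s' t' (\<phi> xs) []"
  and E: "tensor_eq n Js s t X Y"
  shows "tensor_eq n' Js' s' t' (concat (map \<phi> X)) (concat (map \<phi> Y))"
proof -
  have key: "finite (supp f) \<and> Phi \<phi> f \<in> tensor_rel n' Js' s' t'" if "f \<in> tensor_rel n Js s t" for f
    using that
  proof induction
    case zero then show ?case by (simp add: Phi_zero supp_def tensor_rel.zero)
  next
    case (diff f g) then show ?case
      by (simp add: Phi_diff finite_supp_diff tensor_rel.diff)
  next
    case (additive xs i x y)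
    have "Phi \<phi> (\<lambda>w. delta (xs[i := x + y]) w - delta (xs[i := x]) w - delta (xs[i := y]) w)
       = (\<lambda>w. fsum (\<phi> (xs[i := x + y])) w - fsum (\<phi> (xs[i := x]) @ \<phi> (xs[i := y])) w)"
      apply (subst Phi_diff)
        apply (simp_all add: finite_supp_diff finite_supp_delta)
      apply (subst Phi_diff)
        apply (simp_all add: finite_supp_diff finite_supp_delta Phi_delta fsum_append algebra_simps)
      done
    moreover have "finite (supp (\<lambda>w. delta (xs[i := x + y]) w - delta (xs[i := x]) w - delta (xs[i := y]) w))"
      by (simp add: finite_supp_diff finite_supp_delta)
    ultimately show ?case using A[OF additive] by (simp add: tensor_eq_def)
  next
    case (balanced xs i a)
    have "Phi \<phi> (\<lambda>w. delta (xs[i := xs ! i * t a]) w - delta (xs[Suc i := xs ! Suc i * s a]) w)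
       = (\<lambda>w. fsum (\<phi> (xs[i := xs ! i * t a])) w - fsum (\<phi> (xs[Suc i := xs ! Suc i * s a])) w)"
      by (simp add: Phi_diff finite_supp_diff finite_supp_delta Phi_delta)
    moreover have "finite (supp (\<lambda>w. delta (xs[i := xs ! i * t a]) w - delta (xs[Suc i := xs ! Suc i * s a]) w))"
      by (simp add: finite_supp_diff finite_supp_delta)
    ultimately show ?case using B[OF balanced] by (simp add: tensor_eq_def)
  next
    case (kill xs i)
    then show ?case using K[OF kill] by (simp add: tensor_eq_def Phi_delta finite_supp_delta)
  qed
  have "Phi \<phi> (\<lambda>w. fsum X w - fsum Y w) \<in> tensor_rel n' Js' s' t'"
    using key E by (simp add: tensor_eq_def)
  then show ?thesis
    by (simp add: Phi_diff finite_supp_fsum Phi_fsum tensor_eq_def)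
qed



lemma list2: "length xs = 2 \<Longrightarrow> xs = [xs!0, xs!1]"
  by (cases xs; cases "tl xs"; auto)
lemma list3: "length xs = 3 \<Longrightarrow> xs = [xs!0, xs!1, xs!2]"
  by (cases xs; cases "tl xs"; cases "tl (tl xs)"; auto simp: numeral_eq_Suc)
lemma list4: "length xs = 4 \<Longrightarrow> xs = [xs!0, xs!1, xs!2, xs!3]"
  by (cases xs; cases "tl xs"; cases "tl (tl xs)"; cases "tl (tl (tl xs))"; auto simp: numeral_eq_Suc)

lemma less2: "i < (2::nat) \<Longrightarrow> i = 0 \<or> i = Suc 0" by arith
lemma less3: "i < (3::nat) \<Longrightarrow> i = 0 \<or> i = Suc 0 \<or> i = Suc (Suc 0)" by arith
lemma less4: "i < (4::nat) \<Longrightarrow> i = 0 \<or> i = Suc 0 \<or> i = Suc (Suc 0) \<or> i = Suc (Suc (Suc 0))" by arith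

lemma less3': "i < (3::nat) \<Longrightarrow> i = 0 \<or> i = 1 \<or> i = 2" by arith
lemma less4': "i < (4::nat) \<Longrightarrow> i = 0 \<or> i = 1 \<or> i = 2 \<or> i = 3" by arith

lemma resp2:
  assumes "\<And>b x y. tensor_eq n' Js' s' t' (\<phi> [x + y, b]) (\<phi> [x, b] @ \<phi> [y, b])"
    and "\<And>a x y. tensor_eq n' Js' s' t' (\<phi> [a, x + y]) (\<phi> [a, x] @ \<phi> [a, y])"
    and "\<And>a b e. tensor_eq n' Js' s' t' (\<phi> [a * t e, b]) (\<phi> [a, b * s e])"
    and "\<And>a b. a \<in> Js ! 0 \<Longrightarrow> tensor_eq n' Js' s' t' (\<phi> [a, b]) []"
    and "\<And>a b. b \<in> Js ! 1 \<Longrightarrow> tensor_eq n' Js' s' t' (\<phi> [a, b]) []"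
    and "tensor_eq 2 Js s t X Y"
  shows "tensor_eq n' Js' s' t' (concat (map \<phi> X)) (concat (map \<phi> Y))"
proof (rule respects_intro[OF _ _ _ assms(6)])
  fix xs :: "'a list" and i :: nat and x y assume prems: "length xs = 2" "i < 2"
  show "tensor_eq n' Js' s' t' (\<phi> (xs[i := x + y])) (\<phi> (xs[i := x]) @ \<phi> (xs[i := y]))"
    proof -
      obtain a b where "xs = [a, b]" using list2[OF \<open>length xs = 2\<close>] by blast
      then show ?thesis using prems assms(1,2) by (auto dest!: less2)
    qed
next
  fix xs :: "'a list" and i :: nat and e assume prems: "length xs = 2" "Suc i < 2"
  show "tensor_eq n' Js' s' t' (\<phi> (xs[i := xs ! i * t e])) (\<phi> (xs[Suc i := xs ! Suc i * s e]))"
    proof -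
      obtain a b where "xs = [a, b]" using list2[OF \<open>length xs = 2\<close>] by blast
      then show ?thesis using prems assms(3) by (auto)
    qed
next
  fix xs :: "'a list" and i :: nat assume prems: "length xs = 2" "i < 2" "xs ! i \<in> Js ! i"
  show "tensor_eq n' Js' s' t' (\<phi> xs) []"
    proof -
      obtain a b where "xs = [a, b]" using list2[OF \<open>length xs = 2\<close>] by blast
      then show ?thesis using prems assms(4,5) by (auto dest!: less2)
    qed
qed

lemma resp3:
  assumes "\<And>b c x y. tensor_eq n' Js' s' t' (\<phi> [x + y, b, c]) (\<phi> [x, b, c] @ \<phi> [y, b, c])"
    and "\<And>a c x y. tensor_eq n' Js' s' t' (\<phi> [a, x + y, c]) (\<phi> [a, x, c] @ \<phi> [a, y, c])"
    and "\<And>a b x y. tensor_eq n' Js' s' t' (\<phi> [a, b, x + y]) (\<phi> [a, b, x] @ \<phi> [a, b, y])"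
    and "\<And>a b c e. tensor_eq n' Js' s' t' (\<phi> [a * t e, b, c]) (\<phi> [a, b * s e, c])"
    and "\<And>a b c e. tensor_eq n' Js' s' t' (\<phi> [a, b * t e, c]) (\<phi> [a, b, c * s e])"
    and "\<And>a b c. a \<in> Js ! 0 \<Longrightarrow> tensor_eq n' Js' s' t' (\<phi> [a, b, c]) []"
    and "\<And>a b c. b \<in> Js ! 1 \<Longrightarrow> tensor_eq n' Js' s' t' (\<phi> [a, b, c]) []"
    and "\<And>a b c. c \<in> Js ! 2 \<Longrightarrow> tensor_eq n' Js' s' t' (\<phi> [a, b, c]) []"
    and "tensor_eq 3 Js s t X Y"
  shows "tensor_eq n' Js' s' t' (concat (map \<phi> X)) (concat (map \<phi> Y))"
proof (rule respects_intro[OF _ _ _ assms(9)])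
  fix xs :: "'a list" and i :: nat and x y assume prems: "length xs = 3" "i < 3"
  show "tensor_eq n' Js' s' t' (\<phi> (xs[i := x + y])) (\<phi> (xs[i := x]) @ \<phi> (xs[i := y]))"
    proof -
      obtain a b c where "xs = [a, b, c]" using list3[OF \<open>length xs = 3\<close>] by blast
      then show ?thesis using prems assms(1,2,3) by (auto dest!: less3)
    qed
next
  fix xs :: "'a list" and i :: nat and e assume prems: "length xs = 3" "Suc i < 3"
  show "tensor_eq n' Js' s' t' (\<phi> (xs[i := xs ! i * t e])) (\<phi> (xs[Suc i := xs ! Suc i * s e]))"
    proof -
      obtain a b c where "xs = [a, b, c]" using list3[OF \<open>length xs = 3\<close>] by blast
      then show ?thesis using prems assms(4,5) by (auto dest!: less2)
    qed
next
  fix xs :: "'a list" and i :: nat assume prems: "length xs = 3" "i < 3" "xs ! i \<in> Js ! i"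
  show "tensor_eq n' Js' s' t' (\<phi> xs) []"
    proof -
      obtain a b c where "xs = [a, b, c]" using list3[OF \<open>length xs = 3\<close>] by blast
      then show ?thesis using prems assms(6,7,8) by (auto dest!: less3')
    qed
qed

lemma resp4:
  assumes "\<And>b c d x y. tensor_eq n' Js' s' t' (\<phi> [x + y, b, c, d]) (\<phi> [x, b, c, d] @ \<phi> [y, b, c, d])"
    and "\<And>a c d x y. tensor_eq n' Js' s' t' (\<phi> [a, x + y, c, d]) (\<phi> [a, x, c, d] @ \<phi> [a, y, c, d])"
    and "\<And>a b d x y. tensor_eq n' Js' s' t' (\<phi> [a, b, x + y, d]) (\<phi> [a, b, x, d] @ \<phi> [a, b, y, d])"
    and "\<And>a b c x y. tensor_eq n' Js' s' t' (\<phi> [a, b, c, x + y]) (\<phi> [a, b, c, x] @ \<phi> [a, b, c, y])"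
    and "\<And>a b c d e. tensor_eq n' Js' s' t' (\<phi> [a * t e, b, c, d]) (\<phi> [a, b * s e, c, d])"
    and "\<And>a b c d e. tensor_eq n' Js' s' t' (\<phi> [a, b * t e, c, d]) (\<phi> [a, b, c * s e, d])"
    and "\<And>a b c d e. tensor_eq n' Js' s' t' (\<phi> [a, b, c * t e, d]) (\<phi> [a, b, c, d * s e])"
    and "\<And>a b c d. a \<in> Js ! 0 \<Longrightarrow> tensor_eq n' Js' s' t' (\<phi> [a, b, c, d]) []"
    and "\<And>a b c d. b \<in> Js ! 1 \<Longrightarrow> tensor_eq n' Js' s' t' (\<phi> [a, b, c, d]) []"
    and "\<And>a b c d. c \<in> Js ! 2 \<Longrightarrow> tensor_eq n' Js' s' t' (\<phi> [a, b, c, d]) []"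
    and "\<And>a b c d. d \<in> Js ! 3 \<Longrightarrow> tensor_eq n' Js' s' t' (\<phi> [a, b, c, d]) []"
    and "tensor_eq 4 Js s t X Y"
  shows "tensor_eq n' Js' s' t' (concat (map \<phi> X)) (concat (map \<phi> Y))"
proof (rule respects_intro[OF _ _ _ assms(12)])
  fix xs :: "'a list" and i :: nat and x y assume prems: "length xs = 4" "i < 4"
  show "tensor_eq n' Js' s' t' (\<phi> (xs[i := x + y])) (\<phi> (xs[i := x]) @ \<phi> (xs[i := y]))"
    proof -
      obtain a b c d where "xs = [a, b, c, d]" using list4[OF \<open>length xs = 4\<close>] by blast
      then show ?thesis using prems assms(1,2,3,4) by (auto dest!: less4)
    qed
next
  fix xs :: "'a list" and i :: nat and e assume prems: "length xs = 4" "Suc i < 4"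
  show "tensor_eq n' Js' s' t' (\<phi> (xs[i := xs ! i * t e])) (\<phi> (xs[Suc i := xs ! Suc i * s e]))"
    proof -
      obtain a b c d where "xs = [a, b, c, d]" using list4[OF \<open>length xs = 4\<close>] by blast
      then show ?thesis using prems assms(5,6,7) by (auto dest!: less3)
    qed
next
  fix xs :: "'a list" and i :: nat assume prems: "length xs = 4" "i < 4" "xs ! i \<in> Js ! i"
  show "tensor_eq n' Js' s' t' (\<phi> xs) []"
    proof -
      obtain a b c d where "xs = [a, b, c, d]" using list4[OF \<open>length xs = 4\<close>] by blast
      then show ?thesis using prems assms(8,9,10,11) by (auto dest!: less4')
    qed
qed

lemma embed:
  assumes "tensor_eq n Js s t X Y"
    and "\<And>i. i < n \<Longrightarrow> Js ! i \<subseteq> Js' ! (length pre + i)"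
    and "n' = length pre + n + length post"
  shows "tensor_eq n' Js' s t (map (\<lambda>xs. pre @ xs @ post) X) (map (\<lambda>xs. pre @ xs @ post) Y)"
proof -
  have upd: "pre @ xs[i := v] @ post = (pre @ xs @ post)[length pre + i := v]" if "i < length xs" for xs i v
    using that by (simp add: list_update_append)
  have nth: "(pre @ xs @ post) ! (length pre + i) = xs ! i" if "i < length xs" for xs :: "'a list" and i
    using that by (simp add: nth_append)
  have "tensor_eq n' Js' s t (concat (map (\<lambda>xs. [pre @ xs @ post]) X)) (concat (map (\<lambda>xs. [pre @ xs @ post]) Y))"
  proof (rule respects_intro[OF _ _ _ assms(1)])
    fix xs :: "'a list" and i :: nat and x y assume a: "length xs = n" "i < n"
    then show "tensor_eq n' Js' s t [pre @ xs[i := x + y] @ post] ([pre @ xs[i := x] @ post] @ [pre @ xs[i := y] @ post])"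
      using gen_add[of "pre @ xs @ post" n' "length pre + i" Js' s t x y] assms(3) by (simp add: upd)
  next
    fix xs :: "'a list" and i :: nat and e assume a: "length xs = n" "Suc i < n"
    have "tensor_eq n' Js' s t [(pre @ xs @ post)[length pre + i := (pre @ xs @ post) ! (length pre + i) * t e]]
        [(pre @ xs @ post)[Suc (length pre + i) := (pre @ xs @ post) ! Suc (length pre + i) * s e]]"
      using a assms(3) by (intro gen_bal) auto
    then show "tensor_eq n' Js' s t [pre @ xs[i := xs ! i * t e] @ post] [pre @ xs[Suc i := xs ! Suc i * s e] @ post]"
      using a nth[of i xs] nth[of "Suc i" xs] upd[of i xs] upd[of "Suc i" xs] by simp
  next
    fix xs :: "'a list" and i :: nat assume a: "length xs = n" "i < n" "xs ! i \<in> Js ! i"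
    show "tensor_eq n' Js' s t [pre @ xs @ post] []"
      using a assms(2,3) nth[of i xs] by (intro gen_kill[where i="length pre + i"]) auto
  qed
  then show ?thesis by (simp add: concat_map_singleton)
qed



lemma sum0: "tensor_eq 2 Js s t [[sum_list (map f L), y]] (map (\<lambda>l. [f l, y]) L)"
proof (induction L)
  case Nil then show ?case using gen_zero[of "[0, y]" 2 0 Js s t] by simp
next
  case (Cons l L)
  have "tensor_eq 2 Js s t [[f l + sum_list (map f L), y]] [[f l, y], [sum_list (map f L), y]]"
    using gen_add[of "[0, y]" 2 0 Js s t "f l" "sum_list (map f L)"] by simp
  moreover have "tensor_eq 2 Js s t ([[f l, y]] @ [[sum_list (map f L), y]]) ([[f l, y]] @ map (\<lambda>l. [f l, y]) L)"
    using Cons by (intro te_app) auto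
  ultimately show ?case by (auto intro: te_trans)
qed

lemma sum1: "tensor_eq 2 Js s t [[x, sum_list (map f L)]] (map (\<lambda>l. [x, f l]) L)"
proof (induction L)
  case Nil then show ?case using gen_zero[of "[x, 0]" 2 1 Js s t] by simp
next
  case (Cons l L)
  have "tensor_eq 2 Js s t [[x, f l + sum_list (map f L)]] [[x, f l], [x, sum_list (map f L)]]"
    using gen_add[of "[x, 0]" 2 1 Js s t "f l" "sum_list (map f L)"] by simp
  moreover have "tensor_eq 2 Js s t ([[x, f l]] @ [[x, sum_list (map f L)]]) ([[x, f l]] @ map (\<lambda>l. [x, f l]) L)"
    using Cons by (intro te_app) auto
  ultimately show ?case by (auto intro: te_trans)
qed

lemma mset_pairs: "mset (concat (map (\<lambda>l. [f l, g l]) L)) = mset (map f L @ map g L)"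
  by (induction L) auto

lemma te_pairs:
  assumes "\<And>l. l \<in> set L \<Longrightarrow> tensor_eq n Js s t [h l] [f l, g l]"
  shows "tensor_eq n Js s t (map h L) (map f L @ map g L)"
proof -
  have "tensor_eq n Js s t (concat (map (\<lambda>l. [h l]) L)) (concat (map (\<lambda>l. [f l, g l]) L))"
    using assms by (intro te_concat)
  moreover have "tensor_eq n Js s t (concat (map (\<lambda>l. [f l, g l]) L)) (map f L @ map g L)"
    by (rule te_mset) (simp add: mset_pairs)
  ultimately show ?thesis by (auto intro: te_trans simp: concat_map_singleton)
qed

lemma concat_map_nil[simp]: "concat (map (\<lambda>l. []) L) = []" by (induction L) auto

lemma te_killall:
  assumes "\<And>l. l \<in> set L \<Longrightarrow> tensor_eq n Js s t [f l] []"
  shows "tensor_eq n Js s t (map f L) []"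
proof -
  have "tensor_eq n Js s t (concat (map (\<lambda>l. [f l]) L)) (concat (map (\<lambda>l. []) L))"
    using assms by (intro te_concat)
  then show ?thesis by (simp add: concat_map_singleton)
qed

lemma te_map:
  assumes "\<And>l. l \<in> set L \<Longrightarrow> tensor_eq n Js s t [f l] [g l]"
  shows "tensor_eq n Js s t (map f L) (map g L)"
proof -
  have "tensor_eq n Js s t (concat (map (\<lambda>l. [f l]) L)) (concat (map (\<lambda>l. [g l]) L))"
    using assms by (intro te_concat)
  then show ?thesis by (simp add: concat_map_singleton)
qed

lemma st_mem: "x * (t a - s a) \<in> st_ideal s t"
proof -
  have "x * (t a - s a) = sum_list (map (\<lambda>(h, a). h * (s a - t a)) [(- x, a)])"
    by (simp add: algebra_simps)
  then show ?thesis unfolding st_ideal_def by blast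
qed

lemma modI0: "st_ideal s t \<subseteq> Js ! 0 \<Longrightarrow> tensor_eq 2 Js s t [[x * t a, y]] [[x * s a, y]]"
proof -
  assume a: "st_ideal s t \<subseteq> Js ! 0"
  have "tensor_eq 2 Js s t [[x * s a + x * (t a - s a), y]] [[x * s a, y], [x * (t a - s a), y]]"
    using gen_add[of "[0, y]" 2 0 Js s t] by simp
  moreover have "tensor_eq 2 Js s t ([[x * s a, y]] @ [[x * (t a - s a), y]]) ([[x * s a, y]] @ [])"
    using a st_mem[of x t a s] by (intro te_app te_refl gen_kill[of _ 2 0]) auto
  moreover have "x * s a + x * (t a - s a) = x * t a" by (simp add: algebra_simps)
  ultimately show ?thesis by (auto intro: te_trans)
qed

lemma modI1: "st_ideal s t \<subseteq> Js ! 1 \<Longrightarrow> tensor_eq 2 Js s t [[y, x * t a]] [[y, x * s a]]"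
proof -
  assume a: "st_ideal s t \<subseteq> Js ! 1"
  have "tensor_eq 2 Js s t [[y, x * s a + x * (t a - s a)]] [[y, x * s a], [y, x * (t a - s a)]]"
    using gen_add[of "[y, 0]" 2 1 Js s t] by simp
  moreover have "tensor_eq 2 Js s t ([[y, x * s a]] @ [[y, x * (t a - s a)]]) ([[y, x * s a]] @ [])"
    using a st_mem[of x t a s] by (intro te_app te_refl gen_kill[of _ 2 1]) auto
  moreover have "x * s a + x * (t a - s a) = x * t a" by (simp add: algebra_simps)
  ultimately show ?thesis by (auto intro: te_trans)
qed

lemma bal2: "tensor_eq 2 Js s t [[x * t a, y]] [[x, y * s a]]"
  using gen_bal[of "[x, y]" 2 0 Js s t a] by simp

lemma tup2_append: "tup2 (X @ Y) = tup2 X @ tup2 Y" by (simp add: tup2_def)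
lemma tup3_append: "tup3 (X @ Y) = tup3 X @ tup3 Y" by (simp add: tup3_def)



lemma tup2_alt: "tup2 L = map (\<lambda>p. [fst p, snd p]) L" by (simp add: tup2_def split_def)
lemma tup3_alt: "tup3 L = map (\<lambda>p. [fst p, fst (snd p), snd (snd p)]) L" by (simp add: tup3_def split_def)

lemma emb_post23: "tensor_eq 2 [{0},{0}] s t X Y \<Longrightarrow>
  tensor_eq 3 [{0},{0},{0}] s t (map (\<lambda>l. l @ [y]) X) (map (\<lambda>l. l @ [y]) Y)"
proof -
  assume a: "tensor_eq 2 [{0},{0}] s t X Y"
  have "\<And>i. i < 2 \<Longrightarrow> [{0},{0}] ! i \<subseteq> [{0},{0},{0}] ! (length ([]) + i)" by (auto dest!: less2)
  from embed[OF a this, of "3" "[y]"] show ?thesis by simp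
qed

lemma emb_mid24: "tensor_eq 2 [{0},{0}] s t X Y \<Longrightarrow>
  tensor_eq 4 [{0},{0},{0},{0}] s t (map (\<lambda>l. a # l @ [y]) X) (map (\<lambda>l. a # l @ [y]) Y)"
proof -
  assume a: "tensor_eq 2 [{0},{0}] s t X Y"
  have "\<And>i. i < 2 \<Longrightarrow> [{0},{0}] ! i \<subseteq> [{0},{0},{0},{0}] ! (length ([a]) + i)" by (auto dest!: less2)
  from embed[OF a this, of "4" "[y]"] show ?thesis by simp
qed

lemma emb_post34: "tensor_eq 3 [{0},{0},{0}] s t X Y \<Longrightarrow>
  tensor_eq 4 [{0},{0},{0},{0}] s t (map (\<lambda>l. l @ [y]) X) (map (\<lambda>l. l @ [y]) Y)"
proof -
  assume a: "tensor_eq 3 [{0},{0},{0}] s t X Y"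
  have "\<And>i. i < 3 \<Longrightarrow> [{0},{0},{0}] ! i \<subseteq> [{0},{0},{0},{0}] ! (length ([]) + i)" by (auto dest!: less3)
  from embed[OF a this, of "4" "[y]"] show ?thesis by simp
qed

lemma emb_pre34: "tensor_eq 3 [{0},{0},{0}] s t X Y \<Longrightarrow>
  tensor_eq 4 [{0},{0},{0},{0}] s t (map (\<lambda>l. a # l) X) (map (\<lambda>l. a # l) Y)"
proof -
  assume a: "tensor_eq 3 [{0},{0},{0}] s t X Y"
  have "\<And>i. i < 3 \<Longrightarrow> [{0},{0},{0}] ! i \<subseteq> [{0},{0},{0},{0}] ! (length ([a]) + i)" by (auto dest!: less3)
  from embed[OF a this, of "4" "[]"] show ?thesis by simp
qed

lemma emb_pre3J: "tensor_eq 3 [{0},{0},{0}] s t X Y \<Longrightarrow>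
  tensor_eq 4 [{0},{0},{0},{0}] s t (map (\<lambda>l. a # l) X) (map (\<lambda>l. a # l) Y)"
  using emb_pre34 .

definition D1 :: "('h \<Rightarrow> ('h \<times> 'h) list) \<Rightarrow> 'h list \<Rightarrow> 'h list list" where
  "D1 Delta xs = map (\<lambda>p. [fst p, snd p, xs ! 1]) (Delta (xs ! 0))"

definition D2 :: "('h \<Rightarrow> ('h \<times> 'h) list) \<Rightarrow> 'h list \<Rightarrow> 'h list list" where
  "D2 Delta xs = map (\<lambda>p. [xs ! 0, fst p, snd p, xs ! 2]) (Delta (xs ! 1))"

locale hctx =
  fixes kA :: "'k::field \<Rightarrow> 'a::comm_ring_1" and kH :: "'k \<Rightarrow> 'h::comm_ring_1"
    and s t :: "'a \<Rightarrow> 'h" and eps :: "'h \<Rightarrow> 'a"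
    and Delta :: "'h \<Rightarrow> ('h \<times> 'h) list" and S :: "'h \<Rightarrow> 'h" and I :: "'h set"
  assumes H: "comm_hopf_algebroid kA kH s t eps Delta S"
    and NI: "normal_hopf_ideal s t eps Delta S I"
begin

abbreviation "T2 \<equiv> tensor_eq 2 [{0},{0}] s t"
abbreviation "T3 \<equiv> tensor_eq 3 [{0},{0},{0}] s t"
abbreviation "T4 \<equiv> tensor_eq 4 [{0},{0},{0},{0}] s t"
abbreviation "TIL \<equiv> tensor_eq 2 [I,{0}] s t"
abbreviation "TIR \<equiv> tensor_eq 2 [{0},I] s t"
abbreviation "TST \<equiv> tensor_eq 2 [st_ideal s t,{0}] s t"

lemma S_hom: "is_ring_hom S" using H by (simp add: comm_hopf_algebroid_def)
lemma S_add: "S (x + y) = S x + S y" using S_hom by (simp add: is_ring_hom_def)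
lemma S_mult: "S (x * y) = S x * S y" using S_hom by (simp add: is_ring_hom_def)
lemma S_one: "S 1 = 1" using S_hom by (simp add: is_ring_hom_def)
lemma S_zero: "S 0 = 0" using S_add[of 0 0] by simp
lemma S_S: "S (S x) = x" using H by (simp add: comm_hopf_algebroid_def)
lemma S_s: "S (s a) = t a" using H by (simp add: comm_hopf_algebroid_def fun_eq_iff)
lemma S_t: "S (t a) = s a" using H by (simp add: comm_hopf_algebroid_def fun_eq_iff)

lemma D_add: "T2 (tup2 (Delta (u + v))) (tup2 (Delta u) @ tup2 (Delta v))"
  using H by (simp add: comm_hopf_algebroid_def eqHH_def tup2_append)
lemma D_one: "T2 (tup2 (Delta 1)) [[1, 1]]"
  using H by (simp add: comm_hopf_algebroid_def eqHH_def tup2_def)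
lemma D_s: "T2 (tup2 (Delta (s a * u))) (map (\<lambda>p. [s a * fst p, snd p]) (Delta u))"
proof -
  have "eqHH s t (Delta (s a * u)) (map (\<lambda>(x, y). (s a * x, y)) (Delta u))"
    using H by (simp add: comm_hopf_algebroid_def)
  then show ?thesis by (simp add: eqHH_def tup2_def split_def comp_def)
qed
lemma D_t: "T2 (tup2 (Delta (t a * u))) (map (\<lambda>p. [fst p, t a * snd p]) (Delta u))"
proof -
  have "eqHH s t (Delta (t a * u)) (map (\<lambda>(x, y). (x, t a * y)) (Delta u))"
    using H by (simp add: comm_hopf_algebroid_def)
  then show ?thesis by (simp add: eqHH_def tup2_def split_def comp_def)
qed
lemma D_zero: "T2 (tup2 (Delta 0)) []"
  using D_add[of 0 0] by (intro te_Nil_cancel) (simp add: te_sym)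

lemma coassoc: "T3 (tup3 (DeltaL Delta u)) (tup3 (DeltaR Delta u))"
  using H by (simp add: comm_hopf_algebroid_def)
lemma counit1: "sum_list (map (\<lambda>p. s (eps (fst p)) * snd p) (Delta u)) = u"
  using H by (simp add: comm_hopf_algebroid_def split_def)
lemma counit2: "sum_list (map (\<lambda>p. fst p * t (eps (snd p))) (Delta u)) = u"
  using H by (simp add: comm_hopf_algebroid_def split_def)
lemma anti1: "sum_list (map (\<lambda>p. S (fst p) * snd p) (Delta u)) = t (eps u)"
  using H by (simp add: comm_hopf_algebroid_def split_def)
lemma anti2: "sum_list (map (\<lambda>p. fst p * S (snd p)) (Delta u)) = s (eps u)"
  using H by (simp add: comm_hopf_algebroid_def split_def)

lemma I_ideal: "is_ideal I" using NI by (simp add: normal_hopf_ideal_def hopf_ideal_def)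
lemma I_zero: "0 \<in> I" using I_ideal by (simp add: is_ideal_def)
lemma I_mult: "x \<in> I \<Longrightarrow> h * x \<in> I" using I_ideal by (simp add: is_ideal_def)
lemma st_sub: "st_ideal s t \<subseteq> I" using NI by (simp add: normal_hopf_ideal_def)
lemma normal: "x \<in> I \<Longrightarrow> \<exists>ys. (\<forall>p\<in>set ys. fst p \<in> I) \<and>
   TST (map (\<lambda>p. [fst (snd p), S (fst p) * snd (snd p)]) (DeltaL Delta x)) (tup2 ys)"
  using NI unfolding normal_hopf_ideal_def by (force simp: split_def)

lemma D1_eq: "D1 Delta [x, y] = map (\<lambda>l. l @ [y]) (tup2 (Delta x))"
  by (simp add: D1_def tup2_alt)

lemma D1_resp: "T2 X Y \<Longrightarrow> T3 (concat (map (D1 Delta) X)) (concat (map (D1 Delta) Y))"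
proof (rule resp2)
  fix b x y
  show "T3 (D1 Delta [x + y, b]) (D1 Delta [x, b] @ D1 Delta [y, b])"
    unfolding D1_eq using emb_post23[OF D_add[of x y], of b] by simp
next
  fix a x y
  show "T3 (D1 Delta [a, x + y]) (D1 Delta [a, x] @ D1 Delta [a, y])"
    unfolding D1_def apply simp apply (rule te_pairs)
    using gen_add[of "[_, _, 0]" 3 "Suc (Suc 0)"] by simp
next
  fix a b e
  have "T3 (D1 Delta [t e * a, b]) (map (\<lambda>l. l @ [b]) (map (\<lambda>p. [fst p, t e * snd p]) (Delta a)))"
    unfolding D1_eq by (rule emb_post23[OF D_t])
  moreover have "T3 (map (\<lambda>l. l @ [b]) (map (\<lambda>p. [fst p, t e * snd p]) (Delta a))) (D1 Delta [a, b * s e])"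
    unfolding D1_def by (auto intro!: te_map simp: mult.commute
        intro: gen_bal[of "[_, _, _]" 3 "Suc 0", simplified])
  ultimately show "T3 (D1 Delta [a * t e, b]) (D1 Delta [a, b * s e])"
    by (auto intro: te_trans simp: mult.commute)
next
  fix a b :: 'h assume "a \<in> [{0::'h},{0}] ! 0"
  then show "T3 (D1 Delta [a, b]) []" unfolding D1_eq using emb_post23[OF D_zero, of b] by simp
next
  fix a b :: 'h assume "b \<in> [{0::'h},{0}] ! 1"
  then show "T3 (D1 Delta [a, b]) []" unfolding D1_def
    by (auto intro!: te_killall intro: gen_zero[of "[_, _, _]" 3 "Suc (Suc 0)", simplified])
qed

end


context hctx
begin

lemma DL_D1: "tup3 (DeltaL Delta u) = concat (map (D1 Delta) (tup2 (Delta u)))"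
  by (simp add: DeltaL_def tup3_def tup2_def D1_def map_concat split_def comp_def)

lemma DL_add: "T3 (tup3 (DeltaL Delta (u + v))) (tup3 (DeltaL Delta u) @ tup3 (DeltaL Delta v))"
  using D1_resp[OF D_add[of u v]] by (simp add: DL_D1)

lemma DL_one: "T3 (tup3 (DeltaL Delta 1)) [[1, 1, 1]]"
  using D1_resp[OF D_one] emb_post23[OF D_one, of 1] by (simp add: DL_D1 D1_eq) (rule te_trans)

lemma DL_s: "T3 (tup3 (DeltaL Delta (s e * u))) (map (\<lambda>l. [s e * l ! 0, l ! 1, l ! 2]) (tup3 (DeltaL Delta u)))"
proof -
  have 1: "T3 (tup3 (DeltaL Delta (s e * u))) (concat (map (D1 Delta) (map (\<lambda>p. [s e * fst p, snd p]) (Delta u))))"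
    using D1_resp[OF D_s[of e u]] by (simp add: DL_D1)
  have 2: "T3 (concat (map (D1 Delta) (map (\<lambda>p. [s e * fst p, snd p]) (Delta u))))
     (concat (map (\<lambda>p. map (\<lambda>l. l @ [snd p]) (map (\<lambda>q. [s e * fst q, snd q]) (Delta (fst p)))) (Delta u)))"
  proof -
    have "concat (map (D1 Delta) (map (\<lambda>p. [s e * fst p, snd p]) (Delta u)))
       = concat (map (\<lambda>p. map (\<lambda>l. l @ [snd p]) (tup2 (Delta (s e * fst p)))) (Delta u))"
      by (simp add: D1_eq comp_def)
    moreover have "T3 (concat (map (\<lambda>p. map (\<lambda>l. l @ [snd p]) (tup2 (Delta (s e * fst p)))) (Delta u)))
     (concat (map (\<lambda>p. map (\<lambda>l. l @ [snd p]) (map (\<lambda>q. [s e * fst q, snd q]) (Delta (fst p)))) (Delta u)))"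
      by (rule te_concat, rule emb_post23[OF D_s])
    ultimately show ?thesis by simp
  qed
  have 3: "concat (map (\<lambda>p. map (\<lambda>l. l @ [snd p]) (map (\<lambda>q. [s e * fst q, snd q]) (Delta (fst p)))) (Delta u))
      = map (\<lambda>l. [s e * l ! 0, l ! 1, l ! 2]) (tup3 (DeltaL Delta u))"
    by (simp add: DeltaL_def tup3_def map_concat split_def comp_def)
  show ?thesis using 1 2 3 by (auto intro: te_trans)
qed

lemma DL_t: "T3 (tup3 (DeltaL Delta (t e * u))) (map (\<lambda>l. [l ! 0, l ! 1, t e * l ! 2]) (tup3 (DeltaL Delta u)))"
proof -
  have 1: "T3 (tup3 (DeltaL Delta (t e * u))) (concat (map (D1 Delta) (map (\<lambda>p. [fst p, t e * snd p]) (Delta u))))"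
    using D1_resp[OF D_t[of e u]] by (simp add: DL_D1)
  have 3: "concat (map (D1 Delta) (map (\<lambda>p. [fst p, t e * snd p]) (Delta u)))
      = map (\<lambda>l. [l ! 0, l ! 1, t e * l ! 2]) (tup3 (DeltaL Delta u))"
    by (simp add: DeltaL_def tup3_def D1_def map_concat split_def comp_def)
  show ?thesis using 1 3 by simp
qed

lemma D2_eq: "D2 Delta [a, b, c] = map (\<lambda>l. a # l @ [c]) (tup2 (Delta b))"
  by (simp add: D2_def tup2_alt)

lemma D2_resp: "T3 X Y \<Longrightarrow> T4 (concat (map (D2 Delta) X)) (concat (map (D2 Delta) Y))"
proof (rule resp3)
  fix b c x y
  show "T4 (D2 Delta [x + y, b, c]) (D2 Delta [x, b, c] @ D2 Delta [y, b, c])"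
    unfolding D2_def apply simp apply (rule te_pairs)
    using gen_add[of "[0, _, _, _]" 4 0] by simp
next
  fix a c x y
  show "T4 (D2 Delta [a, x + y, c]) (D2 Delta [a, x, c] @ D2 Delta [a, y, c])"
    unfolding D2_eq using emb_mid24[OF D_add[of x y], of a c] by simp
next
  fix a b x y
  show "T4 (D2 Delta [a, b, x + y]) (D2 Delta [a, b, x] @ D2 Delta [a, b, y])"
    unfolding D2_def apply simp apply (rule te_pairs)
    using gen_add[of "[_, _, _, 0]" 4 "Suc (Suc (Suc 0))"] by simp
next
  fix a b c e
  have "T4 (D2 Delta [a, s e * b, c]) (map (\<lambda>l. a # l @ [c]) (map (\<lambda>p. [s e * fst p, snd p]) (Delta b)))"
    unfolding D2_eq by (rule emb_mid24[OF D_s])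
  moreover have "T4 (D2 Delta [a * t e, b, c]) (map (\<lambda>l. a # l @ [c]) (map (\<lambda>p. [s e * fst p, snd p]) (Delta b)))"
    unfolding D2_def by (auto intro!: te_map simp: mult.commute
        intro: gen_bal[of "[_, _, _, _]" 4 0, simplified])
  ultimately show "T4 (D2 Delta [a * t e, b, c]) (D2 Delta [a, b * s e, c])"
    by (auto intro: te_trans te_sym simp: mult.commute)
next
  fix a b c e
  have "T4 (D2 Delta [a, t e * b, c]) (map (\<lambda>l. a # l @ [c]) (map (\<lambda>p. [fst p, t e * snd p]) (Delta b)))"
    unfolding D2_eq by (rule emb_mid24[OF D_t])
  moreover have "T4 (map (\<lambda>l. a # l @ [c]) (map (\<lambda>p. [fst p, t e * snd p]) (Delta b))) (D2 Delta [a, b, c * s e])"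
    unfolding D2_def by (auto intro!: te_map simp: mult.commute
        intro: gen_bal[of "[_, _, _, _]" 4 "Suc (Suc 0)", simplified])
  ultimately show "T4 (D2 Delta [a, b * t e, c]) (D2 Delta [a, b, c * s e])"
    by (auto intro: te_trans simp: mult.commute)
next
  fix a b c :: 'h assume "a \<in> [{0::'h},{0},{0}] ! 0"
  then show "T4 (D2 Delta [a, b, c]) []" unfolding D2_def
    by (auto intro!: te_killall intro: gen_zero[of "[_, _, _, _]" 4 0, simplified])
next
  fix a b c :: 'h assume "b \<in> [{0::'h},{0},{0}] ! 1"
  then show "T4 (D2 Delta [a, b, c]) []" unfolding D2_eq using emb_mid24[OF D_zero, of a c] by simp
next
  fix a b c :: 'h assume "c \<in> [{0::'h},{0},{0}] ! 2"
  then show "T4 (D2 Delta [a, b, c]) []" unfolding D2_def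
    by (auto intro!: te_killall intro: gen_zero[of "[_, _, _, _]" 4 "Suc (Suc (Suc 0))", simplified])
qed

end


definition E2 :: "('h \<Rightarrow> ('h \<times> 'h) list) \<Rightarrow> 'h \<Rightarrow> 'h list list" where
  "E2 Delta h = concat (map (\<lambda>p. map (\<lambda>l. l @ [snd p]) (tup3 (DeltaL Delta (fst p)))) (Delta h))"
definition ER :: "('h \<Rightarrow> ('h \<times> 'h) list) \<Rightarrow> 'h \<Rightarrow> 'h list list" where
  "ER Delta h = concat (map (\<lambda>p. map (\<lambda>l. l @ [snd p]) (tup3 (DeltaR Delta (fst p)))) (Delta h))"
definition E1 :: "('h \<Rightarrow> ('h \<times> 'h) list) \<Rightarrow> 'h \<Rightarrow> 'h list list" where
  "E1 Delta h = concat (map (\<lambda>p. map (\<lambda>l. fst p # l) (tup3 (DeltaL Delta (snd p)))) (Delta h))"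
definition E3 :: "('h \<Rightarrow> ('h \<times> 'h) list) \<Rightarrow> 'h \<Rightarrow> 'h list list" where
  "E3 Delta h = concat (map (\<lambda>p. map (\<lambda>l. fst p # l) (tup3 (DeltaR Delta (snd p)))) (Delta h))"

lemma concat_map_concat: "concat (map f (concat L)) = concat (map (\<lambda>x. concat (map f x)) L)"
  by (induction L) auto

lemma concat_concat': "concat (concat L) = concat (map concat L)"
  by (induction L) auto

context hctx
begin

lemma ER_eq: "ER Delta h = concat (map (D2 Delta) (tup3 (DeltaL Delta h)))"
  by (simp add: ER_def DeltaL_def DeltaR_def tup3_def D2_def map_concat concat_map_concat concat_concat' split_def comp_def)

lemma E1_eq: "E1 Delta h = concat (map (D2 Delta) (tup3 (DeltaR Delta h)))"
  by (simp add: E1_def DeltaL_def DeltaR_def tup3_def D2_def map_concat concat_map_concat concat_concat' split_def comp_def)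

lemma E21: "T4 (E2 Delta h) (E1 Delta h)"
proof -
  have "T4 (E2 Delta h) (ER Delta h)"
    unfolding E2_def ER_def by (rule te_concat, rule emb_post34[OF coassoc])
  moreover have "T4 (ER Delta h) (E1 Delta h)"
    unfolding ER_eq E1_eq by (rule D2_resp[OF coassoc])
  ultimately show ?thesis by (rule te_trans)
qed

lemma E13: "T4 (E1 Delta h) (E3 Delta h)"
  unfolding E1_def E3_def by (rule te_concat, rule emb_pre34[OF coassoc])

lemma add0': "u = v + w \<Longrightarrow> tensor_eq 2 Js s t [[u, y]] [[v, y], [w, y]]"
  using gen_add[of "[0, y]" 2 0 Js s t v w] by simp
lemma add1': "u = v + w \<Longrightarrow> tensor_eq 2 Js s t [[y, u]] [[y, v], [y, w]]"
  using gen_add[of "[y, 0]" 2 "Suc 0" Js s t v w] by simp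
lemma zero0: "tensor_eq 2 Js s t [[0, y]] []"
  using gen_zero[of "[0, y]" 2 0 Js s t] by simp
lemma zero1: "tensor_eq 2 Js s t [[y, 0]] []"
  using gen_zero[of "[y, 0]" 2 "Suc 0" Js s t] by simp
lemma bal_mod0: "st_ideal s t \<subseteq> Js ! 0 \<Longrightarrow> tensor_eq 2 Js s t [[c, X * s e]] [[c * s e, X]]"
  using modI0[of s t Js c e X] bal2[of Js s t c e X] by (auto intro: te_trans te_sym)
lemma bal_mod1: "st_ideal s t \<subseteq> Js ! 1 \<Longrightarrow> tensor_eq 2 Js s t [[X * t e, b]] [[X, b * t e]]"
  using modI1[of s t Js X b e] bal2[of Js s t X e b] by (auto intro: te_trans te_sym)

definition "Q1 xs = [[xs ! 2, xs ! 0 * S (xs ! 1) * xs ! 3]]"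
definition "Q2 xs = [[xs ! 0 * S (xs ! 2) * xs ! 3, xs ! 1]]"

lemma Q1_resp: "T4 X Y \<Longrightarrow> TIL (concat (map Q1 X)) (concat (map Q1 Y))"
proof (rule resp4)
  fix b c d x y show "TIL (Q1 [x + y, b, c, d]) (Q1 [x, b, c, d] @ Q1 [y, b, c, d])"
    unfolding Q1_def by simp (rule add1', simp add: algebra_simps)
next
  fix a c d x y show "TIL (Q1 [a, x + y, c, d]) (Q1 [a, x, c, d] @ Q1 [a, y, c, d])"
    unfolding Q1_def by simp (rule add1', simp add: algebra_simps S_add)
next
  fix a b d x y show "TIL (Q1 [a, b, x + y, d]) (Q1 [a, b, x, d] @ Q1 [a, b, y, d])"
    unfolding Q1_def by simp (rule add0', simp)
next
  fix a b c x y show "TIL (Q1 [a, b, c, x + y]) (Q1 [a, b, c, x] @ Q1 [a, b, c, y])"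
    unfolding Q1_def by simp (rule add1', simp add: algebra_simps)
next
  fix a b c d e show "TIL (Q1 [a * t e, b, c, d]) (Q1 [a, b * s e, c, d])"
    unfolding Q1_def by (simp add: S_mult S_s mult_ac)
next
  fix a b c d e
  have "TIL [[c, (a * S b * d) * s e]] [[c * s e, a * S b * d]]"
    using st_sub by (intro bal_mod0) simp
  then show "TIL (Q1 [a, b * t e, c, d]) (Q1 [a, b, c * s e, d])"
    unfolding Q1_def by (simp add: S_mult S_t mult_ac)
next
  fix a b c d e
  show "TIL (Q1 [a, b, c * t e, d]) (Q1 [a, b, c, d * s e])"
    unfolding Q1_def using bal2[of "[I,{0}]" s t c e "a * S b * d"] by (simp add: mult_ac)
next
  fix a b c d :: 'h assume "a \<in> [{0::'h},{0},{0},{0}] ! 0"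
  then show "TIL (Q1 [a, b, c, d]) []" unfolding Q1_def using zero1 by simp
next
  fix a b c d :: 'h assume "b \<in> [{0::'h},{0},{0},{0}] ! 1"
  then show "TIL (Q1 [a, b, c, d]) []" unfolding Q1_def using zero1 by (simp add: S_zero)
next
  fix a b c d :: 'h assume "c \<in> [{0::'h},{0},{0},{0}] ! 2"
  then show "TIL (Q1 [a, b, c, d]) []" unfolding Q1_def using zero0 by simp
next
  fix a b c d :: 'h assume "d \<in> [{0::'h},{0},{0},{0}] ! 3"
  then show "TIL (Q1 [a, b, c, d]) []" unfolding Q1_def using zero1 by simp
qed

lemma Q2_resp: "T4 X Y \<Longrightarrow> TIR (concat (map Q2 X)) (concat (map Q2 Y))"
proof (rule resp4)
  fix b c d x y show "TIR (Q2 [x + y, b, c, d]) (Q2 [x, b, c, d] @ Q2 [y, b, c, d])"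
    unfolding Q2_def by simp (rule add0', simp add: algebra_simps)
next
  fix a c d x y show "TIR (Q2 [a, x + y, c, d]) (Q2 [a, x, c, d] @ Q2 [a, y, c, d])"
    unfolding Q2_def by simp (rule add1', simp)
next
  fix a b d x y show "TIR (Q2 [a, b, x + y, d]) (Q2 [a, b, x, d] @ Q2 [a, b, y, d])"
    unfolding Q2_def by simp (rule add0', simp add: algebra_simps S_add)
next
  fix a b c x y show "TIR (Q2 [a, b, c, x + y]) (Q2 [a, b, c, x] @ Q2 [a, b, c, y])"
    unfolding Q2_def by simp (rule add0', simp add: algebra_simps)
next
  fix a b c d e show "TIR (Q2 [a * t e, b, c, d]) (Q2 [a, b * s e, c, d])"
    unfolding Q2_def using bal2[of "[{0},I]" s t "a * S c * d" e b] by (simp add: mult_ac)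
next
  fix a b c d e
  have "TIR [[(a * S c * d) * t e, b]] [[a * S c * d, b * t e]]"
    using st_sub by (intro bal_mod1) simp
  then show "TIR (Q2 [a, b * t e, c, d]) (Q2 [a, b, c * s e, d])"
    unfolding Q2_def by (auto simp: S_mult S_s mult_ac intro: te_sym)
next
  fix a b c d e
  show "TIR (Q2 [a, b, c * t e, d]) (Q2 [a, b, c, d * s e])"
    unfolding Q2_def by (simp add: S_mult S_t mult_ac)
next
  fix a b c d :: 'h assume "a \<in> [{0::'h},{0},{0},{0}] ! 0"
  then show "TIR (Q2 [a, b, c, d]) []" unfolding Q2_def using zero0 by simp
next
  fix a b c d :: 'h assume "b \<in> [{0::'h},{0},{0},{0}] ! 1"
  then show "TIR (Q2 [a, b, c, d]) []" unfolding Q2_def using zero1 by simp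
next
  fix a b c d :: 'h assume "c \<in> [{0::'h},{0},{0},{0}] ! 2"
  then show "TIR (Q2 [a, b, c, d]) []" unfolding Q2_def using zero0 by (simp add: S_zero)
next
  fix a b c d :: 'h assume "d \<in> [{0::'h},{0},{0},{0}] ! 3"
  then show "TIR (Q2 [a, b, c, d]) []" unfolding Q2_def using zero0 by simp
qed

end


context hctx
begin

definition "Wm g xs = [[xs ! 0, g * xs ! 1]]"
definition "W2 g xs = [[S (xs ! 1) * g, xs ! 0]]"

lemma Wm_resp: "TST X Y \<Longrightarrow> TIL (concat (map (Wm g) X)) (concat (map (Wm g) Y))"
proof (rule resp2)
  fix b x y show "TIL (Wm g [x + y, b]) (Wm g [x, b] @ Wm g [y, b])"
    unfolding Wm_def by simp (rule add0', simp)
next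
  fix a x y show "TIL (Wm g [a, x + y]) (Wm g [a, x] @ Wm g [a, y])"
    unfolding Wm_def by simp (rule add1', simp add: algebra_simps)
next
  fix a b e show "TIL (Wm g [a * t e, b]) (Wm g [a, b * s e])"
    unfolding Wm_def using bal2[of "[I,{0}]" s t a e "g * b"] by (simp add: mult_ac)
next
  fix a b :: 'h assume "a \<in> [st_ideal s t, {0}] ! 0"
  then show "TIL (Wm g [a, b]) []" unfolding Wm_def
    using st_sub by (intro gen_kill[of _ 2 0]) auto
next
  fix a b :: 'h assume "b \<in> [st_ideal s t, {0}] ! 1"
  then show "TIL (Wm g [a, b]) []" unfolding Wm_def using zero1 by simp
qed

lemma W2_resp: "TST X Y \<Longrightarrow> TIR (concat (map (W2 g) X)) (concat (map (W2 g) Y))"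
proof (rule resp2)
  fix b x y show "TIR (W2 g [x + y, b]) (W2 g [x, b] @ W2 g [y, b])"
    unfolding W2_def by simp (rule add1', simp)
next
  fix a x y show "TIR (W2 g [a, x + y]) (W2 g [a, x] @ W2 g [a, y])"
    unfolding W2_def by simp (rule add0', simp add: algebra_simps S_add)
next
  fix a b e
  have "TIR [[(S b * g) * t e, a]] [[S b * g, a * t e]]"
    using st_sub by (intro bal_mod1) simp
  then show "TIR (W2 g [a * t e, b]) (W2 g [a, b * s e])"
    unfolding W2_def by (auto simp: S_mult S_s mult_ac intro: te_sym)
next
  fix a b :: 'h assume "a \<in> [st_ideal s t, {0}] ! 0"
  then show "TIR (W2 g [a, b]) []" unfolding W2_def
    using st_sub by (intro gen_kill[of _ 2 "Suc 0"]) auto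
next
  fix a b :: 'h assume "b \<in> [st_ideal s t, {0}] ! 1"
  then show "TIR (W2 g [a, b]) []" unfolding W2_def using zero0 by (simp add: S_zero)
qed

definition "M xs = map (\<lambda>p. [fst (snd p), xs ! 0 * S (fst p) * snd (snd p)]) (DeltaL Delta (xs ! 1))"
definition "N xs = map (\<lambda>p. [fst p * S (snd (snd p)) * xs ! 1, fst (snd p)]) (DeltaL Delta (xs ! 0))"

lemma M_Q1: "M [a, b] = concat (map Q1 (map (Cons a) (tup3 (DeltaL Delta b))))"
  by (simp add: M_def Q1_def tup3_alt comp_def concat_map_singleton)
lemma N_Q2: "N [a, b] = concat (map Q2 (map (\<lambda>l. l @ [b]) (tup3 (DeltaL Delta a))))"
  by (simp add: N_def Q2_def tup3_alt comp_def concat_map_singleton)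

lemma M_resp: "TIR X Y \<Longrightarrow> TIL (concat (map M X)) (concat (map M Y))"
proof (rule resp2)
  fix b x y show "TIL (M [x + y, b]) (M [x, b] @ M [y, b])"
    unfolding M_def by simp (rule te_pairs, rule add1', simp add: algebra_simps)
next
  fix a x y show "TIL (M [a, x + y]) (M [a, x] @ M [a, y])"
    unfolding M_Q1 using Q1_resp[OF emb_pre34[OF DL_add[of x y], of a]] by simp
next
  fix a b e
  have "TIL (M [a, s e * b]) (concat (map Q1 (map (Cons a) (map (\<lambda>l. [s e * l ! 0, l ! 1, l ! 2]) (tup3 (DeltaL Delta b))))))"
    unfolding M_Q1 by (rule Q1_resp[OF emb_pre34[OF DL_s]])
  moreover have "concat (map Q1 (map (Cons a) (map (\<lambda>l. [s e * l ! 0, l ! 1, l ! 2]) (tup3 (DeltaL Delta b)))))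
     = M [a * t e, b]"
    by (simp add: M_def Q1_def tup3_alt comp_def concat_map_singleton S_mult S_s mult_ac)
  ultimately show "TIL (M [a * t e, b]) (M [a, b * s e])"
    by (auto simp: mult.commute intro: te_sym)
next
  fix a b :: 'h assume "a \<in> [{0::'h}, I] ! 0"
  then show "TIL (M [a, b]) []" unfolding M_def by (auto intro!: te_killall zero1)
next
  fix a b :: 'h assume "b \<in> [{0::'h}, I] ! 1"
  then have "b \<in> I" by simp
  from normal[OF this] obtain ys where ys: "\<forall>p\<in>set ys. fst p \<in> I"
    "TST (map (\<lambda>p. [fst (snd p), S (fst p) * snd (snd p)]) (DeltaL Delta b)) (tup2 ys)" by blast
  have "TIL (concat (map (Wm a) (map (\<lambda>p. [fst (snd p), S (fst p) * snd (snd p)]) (DeltaL Delta b))))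
      (concat (map (Wm a) (tup2 ys)))" by (rule Wm_resp[OF ys(2)])
  moreover have "concat (map (Wm a) (map (\<lambda>p. [fst (snd p), S (fst p) * snd (snd p)]) (DeltaL Delta b))) = M [a, b]"
    by (simp add: Wm_def M_def comp_def concat_map_singleton mult_ac)
  moreover have "TIL (concat (map (Wm a) (tup2 ys))) []"
    unfolding Wm_def tup2_alt using ys(1)
    apply (auto simp: comp_def concat_map_singleton intro!: te_killall)
    subgoal for aa bb using gen_kill[of "[aa, a * bb]" 2 0 "[I,{0}]" s t] by force
    done
  ultimately show "TIL (M [a, b]) []" by (auto intro: te_trans)
qed

lemma N_resp: "TIL X Y \<Longrightarrow> TIR (concat (map N X)) (concat (map N Y))"
proof (rule resp2)
  fix b x y show "TIR (N [x + y, b]) (N [x, b] @ N [y, b])"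
    unfolding N_Q2 using Q2_resp[OF emb_post34[OF DL_add[of x y], of b]] by simp
next
  fix a x y show "TIR (N [a, x + y]) (N [a, x] @ N [a, y])"
    unfolding N_def by simp (rule te_pairs, rule add0', simp add: algebra_simps)
next
  fix a b e
  have "TIR (N [t e * a, b]) (concat (map Q2 (map (\<lambda>l. l @ [b]) (map (\<lambda>l. [l ! 0, l ! 1, t e * l ! 2]) (tup3 (DeltaL Delta a))))))"
    unfolding N_Q2 by (rule Q2_resp[OF emb_post34[OF DL_t]])
  moreover have "concat (map Q2 (map (\<lambda>l. l @ [b]) (map (\<lambda>l. [l ! 0, l ! 1, t e * l ! 2]) (tup3 (DeltaL Delta a)))))
     = N [a, b * s e]"
    by (simp add: N_def Q2_def tup3_alt comp_def concat_map_singleton S_mult S_t mult_ac)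
  ultimately show "TIR (N [a * t e, b]) (N [a, b * s e])"
    by (auto simp: mult.commute)
next
  fix a b :: 'h assume "a \<in> [I, {0::'h}] ! 0"
  then have "a \<in> I" by simp
  from normal[OF this] obtain ys where ys: "\<forall>p\<in>set ys. fst p \<in> I"
    "TST (map (\<lambda>p. [fst (snd p), S (fst p) * snd (snd p)]) (DeltaL Delta a)) (tup2 ys)" by blast
  have "TIR (concat (map (W2 b) (map (\<lambda>p. [fst (snd p), S (fst p) * snd (snd p)]) (DeltaL Delta a))))
      (concat (map (W2 b) (tup2 ys)))" by (rule W2_resp[OF ys(2)])
  moreover have "concat (map (W2 b) (map (\<lambda>p. [fst (snd p), S (fst p) * snd (snd p)]) (DeltaL Delta a))) = N [a, b]"
    by (simp add: W2_def N_def comp_def concat_map_singleton S_mult S_S mult_ac)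
  moreover have "TIR (concat (map (W2 b) (tup2 ys))) []"
    unfolding W2_def tup2_alt using ys(1)
    apply (auto simp: comp_def concat_map_singleton intro!: te_killall)
    subgoal for aa bb using gen_kill[of "[S bb * b, aa]" 2 "Suc 0" "[{0},I]" s t] by force
    done
  ultimately show "TIR (N [a, b]) []" by (auto intro: te_trans)
next
  fix a b :: 'h assume "b \<in> [I, {0::'h}] ! 1"
  then show "TIR (N [a, b]) []" unfolding N_def by (auto intro!: te_killall zero0)
qed

end


context hctx
begin

lemma Q1E2: "TIL (concat (map Q1 (E2 Delta h))) (tup2 (Delta h))"
proof -
  have eq: "concat (map Q1 (E2 Delta h)) = concat (map (\<lambda>p. concat (map (\<lambda>q.
      map (\<lambda>r. [snd q, fst r * S (snd r) * snd p]) (Delta (fst q))) (Delta (fst p)))) (Delta h))"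
    by (simp add: Q1_def E2_def DeltaL_def tup3_alt map_concat comp_def concat_map_concat concat_concat'
        split_def concat_map_singleton)
  have "TIL (concat (map (\<lambda>p. concat (map (\<lambda>q.
      map (\<lambda>r. [snd q, fst r * S (snd r) * snd p]) (Delta (fst q))) (Delta (fst p)))) (Delta h)))
      (concat (map (\<lambda>p. [[fst p, snd p]]) (Delta h)))"
  proof (rule te_concat)
    fix p assume "p \<in> set (Delta h)"
    have step1: "TIL (map (\<lambda>r. [snd q, fst r * S (snd r) * snd p]) (Delta (fst q)))
        [[snd q * s (eps (fst q)), snd p]]" for q
    proof -
      have "TIL [[snd q, sum_list (map (\<lambda>r. fst r * S (snd r) * snd p) (Delta (fst q)))]]
          (map (\<lambda>r. [snd q, fst r * S (snd r) * snd p]) (Delta (fst q)))" by (rule sum1)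
      moreover have "sum_list (map (\<lambda>r. fst r * S (snd r) * snd p) (Delta (fst q))) = snd p * s (eps (fst q))"
        using anti2[of "fst q"] sum_list_mult_const[of "\<lambda>r. fst r * S (snd r)" "snd p" "Delta (fst q)"]
        by (simp add: mult.commute)
      moreover have "TIL [[snd q, snd p * s (eps (fst q))]] [[snd q * s (eps (fst q)), snd p]]"
        using st_sub by (intro bal_mod0) simp
      ultimately show ?thesis by (auto intro: te_trans te_sym)
    qed
    have "TIL (concat (map (\<lambda>q. map (\<lambda>r. [snd q, fst r * S (snd r) * snd p]) (Delta (fst q))) (Delta (fst p))))
        (concat (map (\<lambda>q. [[snd q * s (eps (fst q)), snd p]]) (Delta (fst p))))"
      by (rule te_concat) (rule step1)
    moreover have "TIL (concat (map (\<lambda>q. [[snd q * s (eps (fst q)), snd p]]) (Delta (fst p))))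
        [[sum_list (map (\<lambda>q. snd q * s (eps (fst q))) (Delta (fst p))), snd p]]"
      unfolding concat_map_singleton by (rule te_sym, rule sum0)
    moreover have "sum_list (map (\<lambda>q. snd q * s (eps (fst q))) (Delta (fst p))) = fst p"
      using counit1[of "fst p"] by (simp add: mult.commute)
    ultimately show "TIL (concat (map (\<lambda>q. map (\<lambda>r. [snd q, fst r * S (snd r) * snd p]) (Delta (fst q))) (Delta (fst p))))
        [[fst p, snd p]]" by (auto intro: te_trans)
  qed
  moreover have "concat (map (\<lambda>p. [[fst p, snd p]]) (Delta h)) = tup2 (Delta h)"
    by (simp add: tup2_alt concat_map_singleton)
  ultimately show ?thesis using eq by simp
qed

lemma Q2E3: "TIR (concat (map Q2 (E3 Delta h))) (tup2 (Delta h))"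
proof -
  have eq: "concat (map Q2 (E3 Delta h)) = concat (map (\<lambda>p. concat (map (\<lambda>q.
      map (\<lambda>r. [fst p * S (fst r) * snd r, fst q]) (Delta (snd q))) (Delta (snd p)))) (Delta h))"
    by (simp add: Q2_def E3_def DeltaR_def tup3_alt map_concat comp_def concat_map_concat concat_concat'
        split_def concat_map_singleton)
  have "TIR (concat (map (\<lambda>p. concat (map (\<lambda>q.
      map (\<lambda>r. [fst p * S (fst r) * snd r, fst q]) (Delta (snd q))) (Delta (snd p)))) (Delta h)))
      (concat (map (\<lambda>p. [[fst p, snd p]]) (Delta h)))"
  proof (rule te_concat)
    fix p assume "p \<in> set (Delta h)"
    have step1: "TIR (map (\<lambda>r. [fst p * S (fst r) * snd r, fst q]) (Delta (snd q)))
        [[fst p, fst q * t (eps (snd q))]]" for q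
    proof -
      have "TIR [[sum_list (map (\<lambda>r. fst p * S (fst r) * snd r) (Delta (snd q))), fst q]]
          (map (\<lambda>r. [fst p * S (fst r) * snd r, fst q]) (Delta (snd q)))" by (rule sum0)
      moreover have "sum_list (map (\<lambda>r. fst p * S (fst r) * snd r) (Delta (snd q))) = fst p * t (eps (snd q))"
        using anti1[of "snd q"] sum_list_const_mult[of "fst p" "\<lambda>r. S (fst r) * snd r" "Delta (snd q)"]
        by (simp add: mult.assoc)
      moreover have "TIR [[fst p * t (eps (snd q)), fst q]] [[fst p, fst q * t (eps (snd q))]]"
        using st_sub by (intro bal_mod1) simp
      ultimately show ?thesis by (auto intro: te_trans te_sym)
    qed
    have "TIR (concat (map (\<lambda>q. map (\<lambda>r. [fst p * S (fst r) * snd r, fst q]) (Delta (snd q))) (Delta (snd p))))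
        (concat (map (\<lambda>q. [[fst p, fst q * t (eps (snd q))]]) (Delta (snd p))))"
      by (rule te_concat) (rule step1)
    moreover have "TIR (concat (map (\<lambda>q. [[fst p, fst q * t (eps (snd q))]]) (Delta (snd p))))
        [[fst p, sum_list (map (\<lambda>q. fst q * t (eps (snd q))) (Delta (snd p)))]]"
      unfolding concat_map_singleton by (rule te_sym, rule sum1)
    moreover have "sum_list (map (\<lambda>q. fst q * t (eps (snd q))) (Delta (snd p))) = snd p"
      using counit2[of "snd p"] by simp
    ultimately show "TIR (concat (map (\<lambda>q. map (\<lambda>r. [fst p * S (fst r) * snd r, fst q]) (Delta (snd q))) (Delta (snd p))))
        [[fst p, snd p]]" by (auto intro: te_trans)
  qed
  moreover have "concat (map (\<lambda>p. [[fst p, snd p]]) (Delta h)) = tup2 (Delta h)"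
    by (simp add: tup2_alt concat_map_singleton)
  ultimately show ?thesis using eq by simp
qed

lemma LR: "TIR (tup2 (Delta h)) [[h, 1]] \<Longrightarrow> TIL (tup2 (Delta h)) [[1, h]]"
proof -
  assume a: "TIR (tup2 (Delta h)) [[h, 1]]"
  have 1: "TIL (concat (map M (tup2 (Delta h)))) (M [h, 1])"
    using M_resp[OF a] by simp
  have 2: "TIL (M [h, 1]) [[1, h]]"
    unfolding M_Q1 using Q1_resp[OF emb_pre34[OF DL_one, of h]] by (simp add: Q1_def S_one)
  have 3: "concat (map M (tup2 (Delta h))) = concat (map Q1 (E1 Delta h))"
    by (simp add: M_def Q1_def E1_def tup2_alt tup3_alt map_concat comp_def concat_map_concat
        concat_concat' concat_map_singleton)
  have 4: "TIL (concat (map Q1 (E2 Delta h))) (concat (map Q1 (E1 Delta h)))"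
    by (rule Q1_resp[OF E21])
  show ?thesis using Q1E2[of h] 1 2 3 4 by (metis te_sym te_trans)
qed

lemma RL: "TIL (tup2 (Delta h)) [[1, h]] \<Longrightarrow> TIR (tup2 (Delta h)) [[h, 1]]"
proof -
  assume a: "TIL (tup2 (Delta h)) [[1, h]]"
  have 1: "TIR (concat (map N (tup2 (Delta h)))) (N [1, h])"
    using N_resp[OF a] by simp
  have 2: "TIR (N [1, h]) [[h, 1]]"
    unfolding N_Q2 using Q2_resp[OF emb_post34[OF DL_one, of h]] by (simp add: Q2_def S_one)
  have 3: "concat (map N (tup2 (Delta h))) = concat (map Q2 (E2 Delta h))"
    by (simp add: N_def Q2_def E2_def tup2_alt tup3_alt map_concat comp_def concat_map_concat
        concat_concat' concat_map_singleton)
  have 4: "TIR (concat (map Q2 (E2 Delta h))) (concat (map Q2 (E3 Delta h)))"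
    by (rule Q2_resp[OF te_trans[OF E21 E13]])
  show ?thesis using Q2E3[of h] 1 2 3 4 by (metis te_sym te_trans)
qed

end

theorem lemma3p23:
  fixes kA :: "'k::field \<Rightarrow> 'a::comm_ring_1" and kH :: "'k \<Rightarrow> 'h::comm_ring_1"
    and s t :: "'a \<Rightarrow> 'h" and eps :: "'h \<Rightarrow> 'a"
    and Delta :: "'h \<Rightarrow> ('h \<times> 'h) list" and S :: "'h \<Rightarrow> 'h" and I :: "'h set"
  assumes "comm_hopf_algebroid kA kH s t eps Delta S"
    and "normal_hopf_ideal s t eps Delta S I"
  shows "{h. tensor_eq 2 [{0}, I] s t (tup2 (Delta h)) [[h, 1]]}
       = {h. tensor_eq 2 [I, {0}] s t (tup2 (Delta h)) [[1, h]]}"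
proof -
  interpret hctx kA kH s t eps Delta S I using assms by unfold_locales
  show ?thesis using LR RL by blast
qed

end
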